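(* Let $f(u)=|u|^{p-1}u$ with $p>1$, and fix $\beta<2$. Then $$d(\beta,c)=O\Big((c_*-c)^{\frac{p+3}{2(p-1)}}\Big)\qquad\text{as } c\to c_*^-.$$
   Context: Setting: $F(s)=\int_0^sf=|s|^{p+1}/(p+1)$, and $c_*=\sqrt{1-\beta_+^2/4}$ with $\beta_+=\max\{\beta,0\}$. Definitions, for $c^2<1$ and $\beta<2\sqrt{1-c^2}$: - $I(u)=\int u_{xx}^2-\beta u_x^2+(1-c^2)u^2\,dx$ and $K(u)=(p+1)\int F(u)\,dx$. - $m(\beta,c)=\inf\{I(u)/K(u)^{2/(p+1)}:u\in H^2(\mathbb R),u\ne0\}$. - $d(\beta,c)=\frac{p-1}{2(p+1)}m(\beta,c)^{(p+1)/(p-1)}$. Equivalently $d=E(\vec\varphi)+cQ(\vec\varphi)$ at any ground state $\vec\varphi=(\varphi,-c\varphi)$, where $E(u,v)=\int\frac12(u_{xx}^2-\beta u_x^2+u^2+v^2)-F(u)$ and $Q(u,v)=\int uv$. *)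

theory Defs
  imports "HOL-Analysis.Analysis" "HOL-Library.Landau_Symbols"
begin

text \<open>Elements of H^2(R), represented by their (C^1) continuous representative u,
  its classical derivative u1 (locally absolutely continuous) and the weak second
  derivative u2, with u, u1, u2 all in L^2(R).\<close>
definition H2_triple :: "(real \<Rightarrow> real) \<Rightarrow> (real \<Rightarrow> real) \<Rightarrow> (real \<Rightarrow> real) \<Rightarrow> bool" where
  "H2_triple u u1 u2 \<longleftrightarrow>
     (\<forall>x. (u has_real_derivative u1 x) (at x)) \<and>
     u2 \<in> borel_measurable lborel \<and>
     (\<forall>x y. x \<le> y \<longrightarrow> set_integrable lborel {x..y} u2 \<and>
                        u1 y - u1 x = (LBINT t:{x..y}. u2 t)) \<and>
     integrable lborel (\<lambda>x. (u x)^2) \<and>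
     integrable lborel (\<lambda>x. (u1 x)^2) \<and>
     integrable lborel (\<lambda>x. (u2 x)^2)"

definition Fnl :: "real \<Rightarrow> real \<Rightarrow> real" where
  "Fnl p s = \<bar>s\<bar> powr (p + 1) / (p + 1)"

definition I_fun :: "real \<Rightarrow> real \<Rightarrow> (real \<Rightarrow> real) \<Rightarrow> (real \<Rightarrow> real) \<Rightarrow> (real \<Rightarrow> real) \<Rightarrow> real" where
  "I_fun \<beta> c u u1 u2 = (LINT x|lborel. (u2 x)^2 - \<beta> * (u1 x)^2 + (1 - c^2) * (u x)^2)"

definition K_fun :: "real \<Rightarrow> (real \<Rightarrow> real) \<Rightarrow> real" where
  "K_fun p u = (p + 1) * (LINT x|lborel. Fnl p (u x))"

definition m_fun :: "real \<Rightarrow> real \<Rightarrow> real \<Rightarrow> real" where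
  "m_fun p \<beta> c = Inf {I_fun \<beta> c u u1 u2 / (K_fun p u) powr (2 / (p + 1)) | u u1 u2.
                        H2_triple u u1 u2 \<and> u \<noteq> (\<lambda>_. 0)}"

definition d_fun :: "real \<Rightarrow> real \<Rightarrow> real \<Rightarrow> real" where
  "d_fun p \<beta> c = (p - 1) / (2 * (p + 1)) * (m_fun p \<beta> c) powr ((p + 1) / (p - 1))"

definition cstar :: "real \<Rightarrow> real" where
  "cstar \<beta> = sqrt (1 - (max \<beta> 0)^2 / 4)"

end

theory Submission
  imports Defs "HOL-Probability.Distributions"
begin

lemma H2_cont:
  assumes H: "H2_triple u u1 u2"
  shows "isCont u1 z"
proof -
  define a where "a = z - 1"
  define b where "b = z + 1"
  have si: "\<And>x y. x \<le> y \<Longrightarrow> set_integrable lborel {x..y} u2 \<and> u1 y - u1 x = (LBINT t:{x..y}. u2 t)"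
    using H unfolding H2_triple_def by blast
  have ab: "a \<le> b" by (simp add: a_def b_def)
  have iab: "u2 integrable_on {a..b}" using si[OF ab] set_borel_integral_eq_integral(1) by blast
  have eq: "\<And>t. t \<in> {a..b} \<Longrightarrow> u1 t = u1 a + integral {a..t} u2"
  proof -
    fix t assume t: "t \<in> {a..b}"
    then have "a \<le> t" by simp
    from si[OF this] have "set_integrable lborel {a..t} u2" "u1 t - u1 a = (LBINT s:{a..t}. u2 s)" by auto
    then show "u1 t = u1 a + integral {a..t} u2" using set_borel_integral_eq_integral(2) by force
  qed
  have "continuous_on {a..b} (\<lambda>t. u1 a + integral {a..t} u2)"
    by (intro continuous_intros indefinite_integral_continuous_1 iab)
  then have "continuous_on {a..b} u1" using continuous_on_eq eq by (metis (no_types, lifting))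
  moreover have "z \<in> interior {a..b}" by (simp add: a_def b_def)
  ultimately show ?thesis using continuous_on_interior by blast
qed

lemma H2_ftc_u:
  assumes H: "H2_triple u u1 u2" and ab: "a \<le> b"
  shows "(LBINT s:{a..b}. u1 s) = u b - u a"
proof -
  have d: "\<And>x. (u has_real_derivative u1 x) (at x)" using H unfolding H2_triple_def by blast
  have c: "continuous_on {a..b} u1"
    using H2_cont[OF H] by (simp add: continuous_at_imp_continuous_on)
  show ?thesis unfolding set_lebesgue_integral_def
    apply (rule integral_FTC_atLeastAtMost[OF ab _ c])
    using d has_real_derivative_iff_has_vector_derivative has_vector_derivative_at_within by blast
qed

lemma H2_prod:
  assumes H: "H2_triple u u1 u2" and xy: "x \<le> y"
  shows "(LBINT t:{x..y}. u t * u2 t) = u y * u1 y - u x * u1 x - (LBINT t:{x..y}. (u1 t)^2)"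
proof -
  have d: "\<And>x. (u has_real_derivative u1 x) (at x)" using H unfolding H2_triple_def by blast
  have si: "\<And>x y. x \<le> y \<Longrightarrow> set_integrable lborel {x..y} u2 \<and> u1 y - u1 x = (LBINT t:{x..y}. u2 t)"
    using H unfolding H2_triple_def by blast
  have m2[measurable]: "u2 \<in> borel_measurable borel" using H unfolding H2_triple_def by simp
  have cu1: "continuous_on UNIV u1" using H2_cont[OF H] by (simp add: continuous_at_imp_continuous_on)
  have m1[measurable]: "u1 \<in> borel_measurable borel" using cu1 borel_measurable_continuous_onI by blast
  have cu: "continuous_on UNIV u" using d by (meson DERIV_isCont continuous_at_imp_continuous_on)
  have m0[measurable]: "u \<in> borel_measurable borel" using cu borel_measurable_continuous_onI by blast
  define g where "g s t = (if x \<le> t \<and> t \<le> s \<and> s \<le> y then u1 s * u2 t else 0)" for s t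
  define h where "h s t = (indicator {x..y} s * \<bar>u1 s\<bar>) * (indicator {x..y} t * \<bar>u2 t\<bar>)" for s t :: real
  have gm[measurable]: "(\<lambda>(s,t). g s t) \<in> borel_measurable (lborel \<Otimes>\<^sub>M lborel)"
    unfolding g_def by measurable
  have hm[measurable]: "(\<lambda>(s,t). h s t) \<in> borel_measurable (lborel \<Otimes>\<^sub>M lborel)"
    unfolding h_def by measurable
  define C where "C = (LBINT t:{x..y}. \<bar>u2 t\<bar>)"
  have i2': "integrable lborel (\<lambda>t. indicator {x..y} t *\<^sub>R u2 t)"
    using si[OF xy] unfolding set_integrable_def by blast
  have i2: "integrable lborel (\<lambda>t. indicator {x..y} t * \<bar>u2 t\<bar>)"
    using integrable_abs[OF i2'] by (simp add: abs_mult)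
  have i1: "integrable lborel (\<lambda>s. indicator {x..y} s * \<bar>u1 s\<bar>)"
  proof -
    have "set_integrable lborel {x..y} (\<lambda>s. \<bar>u1 s\<bar>)"
      by (intro borel_integrable_atLeastAtMost' continuous_intros continuous_on_subset[OF cu1]) auto
    then show ?thesis unfolding set_integrable_def by simp
  qed
  have hint: "integrable (lborel \<Otimes>\<^sub>M lborel) (\<lambda>(s,t). h s t)"
  proof (rule lborel_pair.Fubini_integrable[OF hm])
    have "(\<lambda>s. \<integral>t. norm (case (s,t) of (s,t) \<Rightarrow> h s t) \<partial>lborel) = (\<lambda>s. (indicator {x..y} s * \<bar>u1 s\<bar>) * (\<integral>t. indicator {x..y} t * \<bar>u2 t\<bar> \<partial>lborel))"
      unfolding h_def by (auto simp: abs_mult)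
    then show "integrable lborel (\<lambda>s. \<integral>t. norm (case (s,t) of (s,t) \<Rightarrow> h s t) \<partial>lborel)"
      using integrable_mult_left[OF i1] by simp
    show "AE s in lborel. integrable lborel (\<lambda>t. case (s,t) of (s,t) \<Rightarrow> h s t)"
      unfolding h_def using integrable_mult_right[OF i2] by simp
  qed
  have gint: "integrable (lborel \<Otimes>\<^sub>M lborel) (\<lambda>(s,t). g s t)"
    apply (rule Bochner_Integration.integrable_bound[OF hint gm])
    by (auto simp: g_def h_def abs_mult split: split_indicator)
  have fub: "(\<integral>t. \<integral>s. g s t \<partial>lborel \<partial>lborel) = (\<integral>s. \<integral>t. g s t \<partial>lborel \<partial>lborel)"
    using lborel_pair.Fubini_integral[of g] gint by simp
  have inner_t: "(\<integral>t. g s t \<partial>lborel) = indicator {x..y} s * (u1 s * (u1 s - u1 x))" for s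
  proof (cases "x \<le> s \<and> s \<le> y")
    case True
    have "(\<integral>t. g s t \<partial>lborel) = (\<integral>t. u1 s * (indicator {x..s} t *\<^sub>R u2 t) \<partial>lborel)"
      by (rule Bochner_Integration.integral_cong) (auto simp: g_def True split: split_indicator)
    also have "\<dots> = u1 s * (LBINT t:{x..s}. u2 t)"
      unfolding set_lebesgue_integral_def by simp
    also have "\<dots> = u1 s * (u1 s - u1 x)" using si[of x s] True by simp
    finally show ?thesis using True by simp
  next
    case False
    then have "\<And>t. g s t = 0" by (auto simp: g_def)
    then show ?thesis using False by simp
  qed
  have inner_s: "(\<integral>s. g s t \<partial>lborel) = indicator {x..y} t * (u2 t * (u y - u t))" for t
  proof (cases "x \<le> t \<and> t \<le> y")
    case True
    have "(\<integral>s. g s t \<partial>lborel) = (\<integral>s. u2 t * (indicator {t..y} s *\<^sub>R u1 s) \<partial>lborel)"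
      by (rule Bochner_Integration.integral_cong) (auto simp: g_def True split: split_indicator)
    also have "\<dots> = u2 t * (LBINT s:{t..y}. u1 s)"
      unfolding set_lebesgue_integral_def by simp
    also have "\<dots> = u2 t * (u y - u t)" using H2_ftc_u[OF H, of t y] True by simp
    finally show ?thesis using True by simp
  next
    case False
    then have "\<And>s. g s t = 0" by (auto simp: g_def)
    then show ?thesis using False by simp
  qed
  have iuu2: "integrable lborel (\<lambda>t. u t * u2 t)"
  proof (rule Bochner_Integration.integrable_bound)
    show "integrable lborel (\<lambda>t. ((u t)^2 + (u2 t)^2) / 2)"
      using H unfolding H2_triple_def by auto
    show "AE t in lborel. norm (u t * u2 t) \<le> norm (((u t)^2 + (u2 t)^2) / 2)"
    proof (rule AE_I2)
      fix t
      have "\<bar>u t * u2 t\<bar> \<le> ((u t)^2 + (u2 t)^2) / 2"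
      proof -
        have "0 \<le> (\<bar>u t\<bar> - \<bar>u2 t\<bar>)^2" by simp
        then have "2 * (\<bar>u t\<bar> * \<bar>u2 t\<bar>) \<le> \<bar>u t\<bar>^2 + \<bar>u2 t\<bar>^2" by (simp add: power2_diff)
        then show ?thesis by (simp add: abs_mult)
      qed
      then show "norm (u t * u2 t) \<le> norm (((u t)^2 + (u2 t)^2) / 2)" by simp
    qed
  qed simp
  have iu1sq: "integrable lborel (\<lambda>t. (u1 t)^2)" using H unfolding H2_triple_def by auto
  have iA: "integrable lborel (\<lambda>t. indicator {x..y} t *\<^sub>R (u t * u2 t))"
    by (rule integrable_mult_indicator[OF _ iuu2]) simp
  have iB: "integrable lborel (\<lambda>t. indicator {x..y} t *\<^sub>R (u1 t)^2)"
    by (rule integrable_mult_indicator[OF _ iu1sq]) simp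
  have iC: "integrable lborel (\<lambda>t. indicator {x..y} t *\<^sub>R u1 t)"
    using borel_integrable_atLeastAtMost'[OF continuous_on_subset[OF cu1]] unfolding set_integrable_def by blast
  have L: "(\<integral>t. \<integral>s. g s t \<partial>lborel \<partial>lborel) = u y * (u1 y - u1 x) - (LBINT t:{x..y}. u t * u2 t)"
  proof -
    have "(\<integral>t. \<integral>s. g s t \<partial>lborel \<partial>lborel) = (\<integral>t. u y * (indicator {x..y} t *\<^sub>R u2 t) - indicator {x..y} t *\<^sub>R (u t * u2 t) \<partial>lborel)"
      by (simp add: inner_s algebra_simps)
    also have "\<dots> = u y * (\<integral>t. indicator {x..y} t *\<^sub>R u2 t \<partial>lborel) - (\<integral>t. indicator {x..y} t *\<^sub>R (u t * u2 t) \<partial>lborel)"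
      using iA i2' by simp
    also have "\<dots> = u y * (u1 y - u1 x) - (LBINT t:{x..y}. u t * u2 t)"
      using si[OF xy] unfolding set_lebesgue_integral_def by simp
    finally show ?thesis .
  qed
  have R: "(\<integral>s. \<integral>t. g s t \<partial>lborel \<partial>lborel) = (LBINT t:{x..y}. (u1 t)^2) - u1 x * (u y - u x)"
  proof -
    have "(\<integral>s. \<integral>t. g s t \<partial>lborel \<partial>lborel) = (\<integral>s. indicator {x..y} s *\<^sub>R (u1 s)^2 - u1 x * (indicator {x..y} s *\<^sub>R u1 s) \<partial>lborel)"
      by (simp add: inner_t algebra_simps power2_eq_square)
    also have "\<dots> = (\<integral>s. indicator {x..y} s *\<^sub>R (u1 s)^2 \<partial>lborel) - u1 x * (\<integral>s. indicator {x..y} s *\<^sub>R u1 s \<partial>lborel)"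
      using iB iC by simp
    also have "\<dots> = (LBINT t:{x..y}. (u1 t)^2) - u1 x * (u y - u x)"
      using H2_ftc_u[OF H xy] unfolding set_lebesgue_integral_def by simp
    finally show ?thesis .
  qed
  show ?thesis using fub L R by (simp add: algebra_simps)
qed

lemma H2_ints:
  assumes H: "H2_triple u u1 u2"
  shows "integrable lborel (\<lambda>t. u t * u2 t)" "integrable lborel (\<lambda>t. u t * u1 t)"
    "integrable lborel (\<lambda>t. (u t)^2)" "integrable lborel (\<lambda>t. (u1 t)^2)" "integrable lborel (\<lambda>t. (u2 t)^2)"
    "u \<in> borel_measurable borel" "u1 \<in> borel_measurable borel" "u2 \<in> borel_measurable borel"
proof -
  have d: "\<And>x. (u has_real_derivative u1 x) (at x)" using H unfolding H2_triple_def by blast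
  show m2: "u2 \<in> borel_measurable borel" using H unfolding H2_triple_def by simp
  have cu1: "continuous_on UNIV u1" using H2_cont[OF H] by (simp add: continuous_at_imp_continuous_on)
  show m1: "u1 \<in> borel_measurable borel" using cu1 borel_measurable_continuous_onI by blast
  have cu: "continuous_on UNIV u" using d by (meson DERIV_isCont continuous_at_imp_continuous_on)
  show m0: "u \<in> borel_measurable borel" using cu borel_measurable_continuous_onI by blast
  show s0: "integrable lborel (\<lambda>t. (u t)^2)" "integrable lborel (\<lambda>t. (u1 t)^2)" "integrable lborel (\<lambda>t. (u2 t)^2)"
    using H unfolding H2_triple_def by auto
  have amgm: "\<bar>a * b\<bar> \<le> (a^2 + b^2) / 2" for a b :: real
  proof -
    have "0 \<le> (\<bar>a\<bar> - \<bar>b\<bar>)^2" by simp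
    then have "2 * (\<bar>a\<bar> * \<bar>b\<bar>) \<le> \<bar>a\<bar>^2 + \<bar>b\<bar>^2" by (simp add: power2_diff)
    then show ?thesis by (simp add: abs_mult)
  qed
  show "integrable lborel (\<lambda>t. u t * u2 t)"
    apply (rule Bochner_Integration.integrable_bound[where f="\<lambda>t. ((u t)^2 + (u2 t)^2) / 2"])
    using s0 m0 m2 amgm by auto
  show "integrable lborel (\<lambda>t. u t * u1 t)"
    apply (rule Bochner_Integration.integrable_bound[where f="\<lambda>t. ((u t)^2 + (u1 t)^2) / 2"])
    using s0 m0 m1 amgm by auto
qed

lemma not_int_far:
  fixes h :: "real \<Rightarrow> real"
  assumes hi: "integrable lborel h" and e: "e > 0"
  shows "\<exists>y\<ge>N. \<bar>h y\<bar> < e" "\<exists>y\<le>N. \<bar>h y\<bar> < e"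
proof -
  have ha: "integrable lborel (\<lambda>t. \<bar>h t\<bar>)" using hi by simp
  define M where "M = (\<integral>t. \<bar>h t\<bar> \<partial>lborel) / e + 1"
  have "0 \<le> (\<integral>t. \<bar>h t\<bar> \<partial>lborel)" by (rule integral_nonneg_AE) simp
  then have Mpos: "M > 0" using e by (simp add: M_def add_nonneg_pos)
  have key: "\<not> (\<forall>y\<in>S. e \<le> \<bar>h y\<bar>)" if S: "S = {N..N+M} \<or> S = {N-M..N}" for S
  proof
    assume A: "\<forall>y\<in>S. e \<le> \<bar>h y\<bar>"
    have meas: "measure lborel S = M" using S Mpos by auto
    have "set_integrable lborel S (\<lambda>_. e)"
      using S by (auto intro!: borel_integrable_atLeastAtMost' continuous_intros)
    then have iS: "integrable lborel (\<lambda>t. indicator S t * e)" unfolding set_integrable_def by simp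
    have "(\<integral>t. indicator S t * e \<partial>lborel) \<le> (\<integral>t. \<bar>h t\<bar> \<partial>lborel)"
      by (rule integral_mono[OF iS ha]) (use A in \<open>auto split: split_indicator\<close>)
    moreover have "(\<integral>t. indicator S t * e \<partial>lborel) = M * e" using meas S by auto
    ultimately have "M * e \<le> (\<integral>t. \<bar>h t\<bar> \<partial>lborel)" using e by auto
    moreover have "M * e = (\<integral>t. \<bar>h t\<bar> \<partial>lborel) + e" using e by (simp add: M_def field_simps)
    ultimately show False using e by simp
  qed
  from key[of "{N..N+M}"] Mpos show "\<exists>y\<ge>N. \<bar>h y\<bar> < e" by (auto simp: not_le)
  from key[of "{N-M..N}"] Mpos show "\<exists>y\<le>N. \<bar>h y\<bar> < e" by (auto simp: not_le)
qed

lemma H2_ibp: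
  assumes H: "H2_triple u u1 u2"
  shows "(\<integral>t. (u1 t)^2 \<partial>lborel) = - (\<integral>t. u t * u2 t \<partial>lborel)"
proof -
  note I = H2_ints[OF H]
  note [measurable] = I(6,7,8)
  define h where "h t = u t * u1 t" for t
  define G where "G t = (u1 t)^2 + u t * u2 t" for t
  have Gi: "integrable lborel G" unfolding G_def using I by simp
  have hi: "integrable lborel h" unfolding h_def using I by simp
  have seg: "h y - h x = (\<integral>t. indicator {x..y} t *\<^sub>R G t \<partial>lborel)" if xy: "x \<le> y" for x y
  proof -
    have "(\<integral>t. indicator {x..y} t *\<^sub>R G t \<partial>lborel) = (\<integral>t. indicator {x..y} t *\<^sub>R (u1 t)^2 + indicator {x..y} t *\<^sub>R (u t * u2 t) \<partial>lborel)"
      unfolding G_def by (simp add: algebra_simps)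
    also have "\<dots> = (LBINT t:{x..y}. (u1 t)^2) + (LBINT t:{x..y}. u t * u2 t)"
      unfolding set_lebesgue_integral_def
      by (intro Bochner_Integration.integral_add integrable_mult_indicator I) auto
    also have "\<dots> = h y - h x" using H2_prod[OF H xy] by (simp add: h_def)
    finally show ?thesis by simp
  qed
  have "\<forall>n. \<exists>y. y \<ge> real n \<and> \<bar>h y\<bar> < inverse (real (Suc n))"
    using not_int_far(1)[OF hi] by simp
  then obtain ys where ys: "\<And>n. ys n \<ge> real n \<and> \<bar>h (ys n)\<bar> < inverse (real (Suc n))"
    unfolding choice_iff by blast
  have "\<forall>n. \<exists>y. y \<le> - real n \<and> \<bar>h y\<bar> < inverse (real (Suc n))"
    using not_int_far(2)[OF hi] by simp
  then obtain xs where xs: "\<And>n. xs n \<le> - real n \<and> \<bar>h (xs n)\<bar> < inverse (real (Suc n))"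
    unfolding choice_iff by blast
  have lim1: "(\<lambda>n. \<integral>t. indicator {xs n..ys n} t *\<^sub>R G t \<partial>lborel) \<longlonglongrightarrow> (\<integral>t. G t \<partial>lborel)"
  proof (rule integral_dominated_convergence[where w="\<lambda>t. \<bar>G t\<bar>"])
    show "G \<in> borel_measurable lborel" using Gi by auto
    show "\<And>n. (\<lambda>t. indicator {xs n..ys n} t *\<^sub>R G t) \<in> borel_measurable lborel" using Gi by auto
    show "integrable lborel (\<lambda>t. \<bar>G t\<bar>)" using Gi by simp
    show "AE t in lborel. (\<lambda>n. indicator {xs n..ys n} t *\<^sub>R G t) \<longlonglongrightarrow> G t"
    proof (rule AE_I2)
      fix t
      have "eventually (\<lambda>n. indicator {xs n..ys n} t *\<^sub>R G t = G t) sequentially"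
        unfolding eventually_sequentially
      proof (intro exI allI impI)
        fix n assume "nat \<lceil>\<bar>t\<bar>\<rceil> \<le> n"
        then have "\<bar>t\<bar> \<le> real n" by linarith
        then have "t \<in> {xs n..ys n}" using xs[of n] ys[of n] by auto
        then show "indicator {xs n..ys n} t *\<^sub>R G t = G t" by simp
      qed
      then show "(\<lambda>n. indicator {xs n..ys n} t *\<^sub>R G t) \<longlonglongrightarrow> G t" by (rule tendsto_eventually)
    qed
    show "\<And>n. AE t in lborel. norm (indicator {xs n..ys n} t *\<^sub>R G t) \<le> \<bar>G t\<bar>"
      by (auto split: split_indicator)
  qed
  have xsys: "xs n \<le> ys n" for n using xs[of n] ys[of n] by (smt (verit) of_nat_0_le_iff)
  have lim2: "(\<lambda>n. h (ys n) - h (xs n)) \<longlonglongrightarrow> 0"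
  proof (rule Lim_null_comparison)
    show "eventually (\<lambda>n. norm (h (ys n) - h (xs n)) \<le> 2 * inverse (real (Suc n))) sequentially"
      using xs ys by (intro always_eventually allI) (smt (verit) real_norm_def)
    show "(\<lambda>n. 2 * inverse (real (Suc n))) \<longlonglongrightarrow> 0"
      using tendsto_mult_right_zero[OF LIMSEQ_inverse_real_of_nat] by simp
  qed
  have "(\<integral>t. G t \<partial>lborel) = 0"
    using LIMSEQ_unique[OF lim1] lim2 seg[OF xsys] by simp
  moreover have "(\<integral>t. G t \<partial>lborel) = (\<integral>t. (u1 t)^2 \<partial>lborel) + (\<integral>t. u t * u2 t \<partial>lborel)"
    unfolding G_def using I by simp
  ultimately show ?thesis by simp
qed

lemma I_nonneg:
  assumes H: "H2_triple u u1 u2" and bc: "(max \<beta> 0)^2 / 4 \<le> 1 - c^2"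
  shows "0 \<le> I_fun \<beta> c u u1 u2"
proof -
  note I = H2_ints[OF H]
  have split: "I_fun \<beta> c u u1 u2 = (\<integral>t. (u2 t)^2 \<partial>lborel) - \<beta> * (\<integral>t. (u1 t)^2 \<partial>lborel) + (1 - c^2) * (\<integral>t. (u t)^2 \<partial>lborel)"
    unfolding I_fun_def using I by simp
  have p0: "0 \<le> (\<integral>t. (u t)^2 \<partial>lborel)" "0 \<le> (\<integral>t. (u1 t)^2 \<partial>lborel)" "0 \<le> (\<integral>t. (u2 t)^2 \<partial>lborel)"
    by (auto intro!: integral_nonneg_AE)
  have s0: "0 \<le> 1 - c^2" using bc by (smt (verit) divide_nonneg_pos zero_le_power2)
  show ?thesis
  proof (cases "\<beta> \<le> 0")
    case True
    then show ?thesis unfolding split using p0 s0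
      by (smt (verit) mult_nonneg_nonneg mult_nonpos_nonneg)
  next
    case False
    then have b2: "\<beta>^2 / 4 \<le> 1 - c^2" using bc by simp
    have pw: "- \<beta> * (u t * u2 t) \<le> (u2 t)^2 + (\<beta>^2/4) * (u t)^2" for t
    proof -
      have "0 \<le> (u2 t + \<beta>/2 * u t)^2" by simp
      then show ?thesis by (simp add: power2_eq_square algebra_simps)
    qed
    have "(\<integral>t. - \<beta> * (u t * u2 t) \<partial>lborel) \<le> (\<integral>t. (u2 t)^2 + (\<beta>^2/4) * (u t)^2 \<partial>lborel)"
      by (rule integral_mono) (use I pw in auto)
    then have "\<beta> * (\<integral>t. (u1 t)^2 \<partial>lborel) \<le> (\<integral>t. (u2 t)^2 \<partial>lborel) + (\<beta>^2/4) * (\<integral>t. (u t)^2 \<partial>lborel)"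
      using I H2_ibp[OF H] by simp
    moreover have "(\<beta>^2/4) * (\<integral>t. (u t)^2 \<partial>lborel) \<le> (1 - c^2) * (\<integral>t. (u t)^2 \<partial>lborel)"
      using b2 p0(1) by (rule mult_right_mono)
    ultimately show ?thesis unfolding split by linarith
  qed
qed

definition EE :: "real \<Rightarrow> real" where "EE t = exp (- (t^2) / 4)"
definition E1 :: "real \<Rightarrow> real" where "E1 t = - (t / 2) * EE t"
definition E2 :: "real \<Rightarrow> real" where "E2 t = (t^2 / 4 - 1 / 2) * EE t"

lemma EE_deriv: "(EE has_real_derivative E1 t) (at t)"
  unfolding EE_def E1_def by (auto intro!: derivative_eq_intros simp: field_simps)
lemma E1_deriv: "(E1 has_real_derivative E2 t) (at t)"
  unfolding EE_def E1_def E2_def by (auto intro!: derivative_eq_intros simp: field_simps power2_eq_square)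

lemma EE_sq: "(EE t)^2 = exp (- (t^2) / 2)"
proof -
  have "EE t * EE t = exp (- (t^2) / 4 + - (t^2) / 4)" unfolding EE_def by (simp only: exp_add)
  also have "- (t^2) / 4 + - (t^2) / 4 = - (t^2) / 2" by simp
  finally show ?thesis by (simp add: power2_eq_square)
qed

lemma int_moment: "integrable lborel (\<lambda>t::real. exp (- (t^2) / 2) * t ^ j)"
proof -
  have "integrable lborel (\<lambda>t. sqrt (2 * pi) * (std_normal_density t * t ^ j))"
    using integrable_std_normal_moment by simp
  then show ?thesis unfolding std_normal_density_def by simp
qed

lemma int_moment': "integrable lborel (\<lambda>t::real. (EE t)^2 * t ^ j)"
  unfolding EE_sq by (rule int_moment)

lemma int_EE: "integrable lborel (\<lambda>t. (EE t)^2)"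
  using int_moment[of 0] by (simp add: EE_sq)
lemma int_E1: "integrable lborel (\<lambda>t. (E1 t)^2)"
proof -
  have e: "(\<lambda>t. (E1 t)^2) = (\<lambda>t. (1/4) * ((EE t)^2 * t^2))"
    by (rule ext) (simp add: E1_def power_mult_distrib field_simps)
  show ?thesis unfolding e by (rule integrable_mult_right[OF int_moment'])
qed
lemma int_E2: "integrable lborel (\<lambda>t. (E2 t)^2)"
proof -
  have e: "(\<lambda>t. (E2 t)^2) = (\<lambda>t. (1/16) * ((EE t)^2 * t^4) + (- (1/4) * ((EE t)^2 * t^2) + (1/4) * ((EE t)^2 * t^0)))"
    by (rule ext) (simp add: E2_def power_mult_distrib field_simps power2_eq_square power4_eq_xxxx)
  show ?thesis unfolding e
    by (intro Bochner_Integration.integrable_add integrable_mult_right int_moment')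
qed

lemma int_scale:
  assumes "integrable lborel (f :: real \<Rightarrow> real)" "e \<noteq> 0"
  shows "integrable lborel (\<lambda>x. f (e * x))"
  using lborel_integrable_real_affine_iff[of e f 0] assms by simp

lemma EE_pos: "0 < EE t" and EE_le1: "EE t \<le> 1"
  unfolding EE_def by auto

definition tw :: "real \<Rightarrow> real \<Rightarrow> real \<Rightarrow> real \<Rightarrow> real" where
  "tw e k th x = EE (e * x) * cos (k * x - th)"
definition tw1 :: "real \<Rightarrow> real \<Rightarrow> real \<Rightarrow> real \<Rightarrow> real" where
  "tw1 e k th x = e * E1 (e * x) * cos (k * x - th) - k * EE (e * x) * sin (k * x - th)"
definition tw2 :: "real \<Rightarrow> real \<Rightarrow> real \<Rightarrow> real \<Rightarrow> real" where
  "tw2 e k th x = e^2 * E2 (e * x) * cos (k * x - th) - 2 * e * k * E1 (e * x) * sin (k * x - th)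
     - k^2 * EE (e * x) * cos (k * x - th)"

lemma EE_chain[derivative_intros]:
  "(g has_real_derivative g') (at x) \<Longrightarrow> ((\<lambda>x. EE (g x)) has_real_derivative E1 (g x) * g') (at x)"
  using DERIV_chain2[OF EE_deriv] by blast
lemma E1_chain[derivative_intros]:
  "(g has_real_derivative g') (at x) \<Longrightarrow> ((\<lambda>x. E1 (g x)) has_real_derivative E2 (g x) * g') (at x)"
  using DERIV_chain2[OF E1_deriv] by blast

lemma cont_EE: "continuous_on UNIV EE" "continuous_on UNIV E1" "continuous_on UNIV E2"
  unfolding EE_def E1_def E2_def by (auto intro!: continuous_intros)

lemma tw_deriv: "(tw e k th has_real_derivative tw1 e k th x) (at x)"
  unfolding tw_def tw1_def by (auto intro!: derivative_eq_intros simp: algebra_simps)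
lemma tw1_deriv: "(tw1 e k th has_real_derivative tw2 e k th x) (at x)"
  unfolding tw1_def tw2_def by (auto intro!: derivative_eq_intros simp: algebra_simps power2_eq_square)

lemma tw2_cont: "continuous_on UNIV (tw2 e k th)"
proof -
  have c: "continuous_on UNIV (\<lambda>x. EE (e * x))" "continuous_on UNIV (\<lambda>x. E1 (e * x))" "continuous_on UNIV (\<lambda>x. E2 (e * x))"
    by (auto intro!: continuous_on_compose2[OF cont_EE(1)] continuous_on_compose2[OF cont_EE(2)]
        continuous_on_compose2[OF cont_EE(3)] continuous_intros)
  show ?thesis unfolding tw2_def by (intro continuous_intros c)
qed

lemma sq3: "(a - b - c)^2 \<le> 3 * (a^2 + b^2 + c^2)" for a b c :: real
proof -
  have "0 \<le> (a + b)^2 + (a + c)^2 + (b - c)^2" by simp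
  then show ?thesis by (simp add: power2_eq_square algebra_simps)
qed
lemma sq2: "(a - b)^2 \<le> 2 * (a^2 + b^2)" for a b :: real
proof -
  have "0 \<le> (a + b)^2" by simp
  then show ?thesis by (simp add: power2_eq_square algebra_simps)
qed
lemma trig_le: "(x * cos t)^2 \<le> x^2" "(x * sin t)^2 \<le> x^2" for x t :: real
proof -
  have "cos t ^2 \<le> 1" "sin t ^2 \<le> 1"
    using sin_cos_squared_add[of t] zero_le_power2[of "sin t"] zero_le_power2[of "cos t"] by linarith+
  then show "(x * cos t)^2 \<le> x^2" "(x * sin t)^2 \<le> x^2"
    by (simp_all add: power_mult_distrib mult_left_le)
qed

lemma tw_H2:
  assumes e: "e \<noteq> 0"
  shows "H2_triple (tw e k th) (tw1 e k th) (tw2 e k th)"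
proof -
  have m2: "tw2 e k th \<in> borel_measurable lborel"
    using borel_measurable_continuous_onI[OF tw2_cont] by simp
  have ftc: "set_integrable lborel {x..y} (tw2 e k th) \<and> tw1 e k th y - tw1 e k th x = (LBINT t:{x..y}. tw2 e k th t)"
    if xy: "x \<le> y" for x y
  proof
    show "set_integrable lborel {x..y} (tw2 e k th)"
      by (rule borel_integrable_atLeastAtMost'[OF continuous_on_subset[OF tw2_cont]]) simp
    show "tw1 e k th y - tw1 e k th x = (LBINT t:{x..y}. tw2 e k th t)"
      unfolding set_lebesgue_integral_def
      by (rule integral_FTC_atLeastAtMost[OF xy _ continuous_on_subset[OF tw2_cont subset_UNIV], symmetric])
         (simp add: has_real_derivative_iff_has_vector_derivative[symmetric] has_field_derivative_at_within[OF tw1_deriv])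
  qed
  have iE: "integrable lborel (\<lambda>x. (EE (e * x))^2)" "integrable lborel (\<lambda>x. (E1 (e * x))^2)"
    "integrable lborel (\<lambda>x. (E2 (e * x))^2)"
    using int_scale[OF int_EE e] int_scale[OF int_E1 e] int_scale[OF int_E2 e] by auto
  have cE: "continuous_on UNIV (\<lambda>x. EE (e * x))" "continuous_on UNIV (\<lambda>x. E1 (e * x))" "continuous_on UNIV (\<lambda>x. E2 (e * x))"
    by (auto intro!: continuous_on_compose2[OF cont_EE(1)] continuous_on_compose2[OF cont_EE(2)]
        continuous_on_compose2[OF cont_EE(3)] continuous_intros)
  have c0: "continuous_on UNIV (tw e k th)" "continuous_on UNIV (tw1 e k th)"
    unfolding tw_def tw1_def by (intro continuous_intros cE)+
  have i0: "integrable lborel (\<lambda>x. (tw e k th x)^2)"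
  proof (rule Bochner_Integration.integrable_bound[OF iE(1)])
    show "(\<lambda>x. (tw e k th x)^2) \<in> borel_measurable lborel"
      using borel_measurable_continuous_onI[OF continuous_on_power[OF c0(1)]] by simp
    show "AE x in lborel. norm ((tw e k th x)^2) \<le> norm ((EE (e * x))^2)"
      unfolding tw_def using trig_le by simp
  qed
  have i1: "integrable lborel (\<lambda>x. (tw1 e k th x)^2)"
  proof (rule Bochner_Integration.integrable_bound)
    show "integrable lborel (\<lambda>x. 2 * ((e * E1 (e * x))^2 + (k * EE (e * x))^2))"
      using iE by (simp add: power_mult_distrib)
    show "(\<lambda>x. (tw1 e k th x)^2) \<in> borel_measurable lborel"
      using borel_measurable_continuous_onI[OF continuous_on_power[OF c0(2)]] by simp
    show "AE x in lborel. norm ((tw1 e k th x)^2) \<le> norm (2 * ((e * E1 (e * x))^2 + (k * EE (e * x))^2))"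
    proof (rule AE_I2)
      fix x
      let ?a = "e * E1 (e * x) * cos (k * x - th)" and ?b = "k * EE (e * x) * sin (k * x - th)"
      have s: "(?a - ?b)^2 \<le> 2 * (?a^2 + ?b^2)" by (rule sq2)
      have t1: "?a^2 \<le> (e * E1 (e * x))^2" and t2: "?b^2 \<le> (k * EE (e * x))^2" by (rule trig_le)+
      have m: "(?a^2 + ?b^2) \<le> ((e * E1 (e * x))^2 + (k * EE (e * x))^2)" by (rule add_mono[OF t1 t2])
      have "(?a - ?b)^2 \<le> 2 * ((e * E1 (e * x))^2 + (k * EE (e * x))^2)" by (rule order_trans[OF s mult_left_mono[OF m]]) simp
      then show "norm ((tw1 e k th x)^2) \<le> norm (2 * ((e * E1 (e * x))^2 + (k * EE (e * x))^2))"
        unfolding tw1_def by simp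
    qed
  qed
  have i2: "integrable lborel (\<lambda>x. (tw2 e k th x)^2)"
  proof (rule Bochner_Integration.integrable_bound)
    show "integrable lborel (\<lambda>x. 3 * ((e^2 * E2 (e * x))^2 + (2 * e * k * E1 (e * x))^2 + (k^2 * EE (e * x))^2))"
      using iE by (simp add: power_mult_distrib)
    show "(\<lambda>x. (tw2 e k th x)^2) \<in> borel_measurable lborel"
      using borel_measurable_continuous_onI[OF continuous_on_power[OF tw2_cont]] by simp
    show "AE x in lborel. norm ((tw2 e k th x)^2) \<le> norm (3 * ((e^2 * E2 (e * x))^2 + (2 * e * k * E1 (e * x))^2 + (k^2 * EE (e * x))^2))"
    proof (rule AE_I2)
      fix x
      let ?a = "e^2 * E2 (e * x) * cos (k * x - th)" and ?b = "2 * e * k * E1 (e * x) * sin (k * x - th)"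
        and ?c = "k^2 * EE (e * x) * cos (k * x - th)"
      have s: "(?a - ?b - ?c)^2 \<le> 3 * (?a^2 + ?b^2 + ?c^2)" by (rule sq3)
      have t1: "?a^2 \<le> (e^2 * E2 (e * x))^2" and t2: "?b^2 \<le> (2 * e * k * E1 (e * x))^2" and t3: "?c^2 \<le> (k^2 * EE (e * x))^2"
        by (rule trig_le)+
      have m: "?a^2 + ?b^2 + ?c^2 \<le> (e^2 * E2 (e * x))^2 + (2 * e * k * E1 (e * x))^2 + (k^2 * EE (e * x))^2"
        by (rule add_mono[OF add_mono[OF t1 t2] t3])
      have "(?a - ?b - ?c)^2 \<le> 3 * ((e^2 * E2 (e * x))^2 + (2 * e * k * E1 (e * x))^2 + (k^2 * EE (e * x))^2)"
        by (rule order_trans[OF s mult_left_mono[OF m]]) simp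
      then show "norm ((tw2 e k th x)^2) \<le> norm (3 * ((e^2 * E2 (e * x))^2 + (2 * e * k * E1 (e * x))^2 + (k^2 * EE (e * x))^2))"
        unfolding tw2_def by simp
    qed
  qed
  show ?thesis unfolding H2_triple_def using tw_deriv tw1_deriv m2 ftc i0 i1 i2 by blast
qed

definition Hf :: "real \<Rightarrow> real \<Rightarrow> real \<Rightarrow> real \<Rightarrow> real \<Rightarrow> real" where
  "Hf e k \<beta> s t = e^2 * (e^2 * (E2 t)^2 - 2 * k^2 * (EE t * E2 t) + (4 * k^2 - \<beta>) * (E1 t)^2)
     + (k^4 - \<beta> * k^2 + s) * (EE t)^2"

lemma int_EE_E2: "integrable lborel (\<lambda>t. EE t * E2 t)"
proof -
  have e: "(\<lambda>t. EE t * E2 t) = (\<lambda>t. (1/4) * ((EE t)^2 * t^2) + (- (1/2)) * ((EE t)^2 * t^0))"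
    by (rule ext) (simp add: E2_def field_simps power2_eq_square)
  show ?thesis unfolding e by (intro Bochner_Integration.integrable_add integrable_mult_right int_moment')
qed

lemma int_Hf: "integrable lborel (Hf e k \<beta> s)"
  unfolding Hf_def
  by (intro Bochner_Integration.integrable_add Bochner_Integration.integrable_diff integrable_mult_right
      int_EE int_E1 int_E2 int_EE_E2)

lemma comb3: assumes "x0 + x1 = X" "y0 + y1 = Y" "z0 + z1 = Z"
  shows "(x0 - \<beta> * y0 + s * z0) + (x1 - \<beta> * y1 + s * z1) = X - \<beta> * Y + s * (Z::real)"
  unfolding assms[symmetric] by (simp add: algebra_simps)

lemma pointwise_sum:
  fixes e k \<beta> s x :: real
  shows "((tw2 e k 0 x)^2 - \<beta> * (tw1 e k 0 x)^2 + s * (tw e k 0 x)^2)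
       + ((tw2 e k (pi/2) x)^2 - \<beta> * (tw1 e k (pi/2) x)^2 + s * (tw e k (pi/2) x)^2)
       = Hf e k \<beta> s (e * x)"
proof -
  define C where "C = cos (k * x)"
  define S where "S = sin (k * x)"
  define P where "P = e^2 * E2 (e * x)"
  define Q where "Q = 2 * e * k * E1 (e * x)"
  define R where "R = k^2 * EE (e * x)"
  define U where "U = e * E1 (e * x)"
  define V where "V = k * EE (e * x)"
  define W where "W = EE (e * x)"
  have cs: "C^2 + S^2 = 1" unfolding C_def S_def by simp
  have c2: "cos (k * x - pi / 2) = sin (k * x)" "sin (k * x - pi / 2) = - cos (k * x)"
    by (simp_all add: cos_diff sin_diff)
  have a: "tw2 e k 0 x = P * C - Q * S - R * C" "tw2 e k (pi/2) x = P * S + Q * C - R * S"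
    unfolding tw2_def by (simp_all add: P_def Q_def R_def C_def S_def c2)
  have b: "tw1 e k 0 x = U * C - V * S" "tw1 e k (pi/2) x = U * S + V * C"
    unfolding tw1_def by (simp_all add: U_def V_def C_def S_def c2)
  have c: "tw e k 0 x = W * C" "tw e k (pi/2) x = W * S"
    unfolding tw_def by (simp_all add: W_def C_def S_def c2)
  have e1: "(P * C - Q * S - R * C)^2 + (P * S + Q * C - R * S)^2 = ((P - R)^2 + Q^2) * (C^2 + S^2)"
    by (simp add: power2_eq_square algebra_simps)
  have e2: "(U * C - V * S)^2 + (U * S + V * C)^2 = (U^2 + V^2) * (C^2 + S^2)"
    by (simp add: power2_eq_square algebra_simps)
  have e3: "(W * C)^2 + (W * S)^2 = W^2 * (C^2 + S^2)"
    by (simp add: power2_eq_square algebra_simps)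
  have "((tw2 e k 0 x)^2 - \<beta> * (tw1 e k 0 x)^2 + s * (tw e k 0 x)^2)
       + ((tw2 e k (pi/2) x)^2 - \<beta> * (tw1 e k (pi/2) x)^2 + s * (tw e k (pi/2) x)^2)
       = ((P - R)^2 + Q^2) - \<beta> * (U^2 + V^2) + s * W^2"
    unfolding a b c using comb3[OF e1[unfolded cs] e2[unfolded cs] e3[unfolded cs]] by simp
  also have "\<dots> = Hf e k \<beta> s (e * x)"
    unfolding Hf_def P_def Q_def R_def U_def V_def W_def
    by (simp add: power2_eq_square algebra_simps power4_eq_xxxx)
  finally show ?thesis .
qed

lemma sum_I:
  assumes e: "e > 0"
  shows "I_fun \<beta> c (tw e k 0) (tw1 e k 0) (tw2 e k 0) + I_fun \<beta> c (tw e k (pi/2)) (tw1 e k (pi/2)) (tw2 e k (pi/2))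
     = (\<integral>t. Hf e k \<beta> (1 - c^2) t \<partial>lborel) / e"
proof -
  have e0: "e \<noteq> 0" using e by simp
  note I0 = H2_ints[OF tw_H2[OF e0, of k 0]]
  note I1 = H2_ints[OF tw_H2[OF e0, of k "pi/2"]]
  have "I_fun \<beta> c (tw e k 0) (tw1 e k 0) (tw2 e k 0) + I_fun \<beta> c (tw e k (pi/2)) (tw1 e k (pi/2)) (tw2 e k (pi/2))
      = (\<integral>x. ((tw2 e k 0 x)^2 - \<beta> * (tw1 e k 0 x)^2 + (1 - c^2) * (tw e k 0 x)^2)
       + ((tw2 e k (pi/2) x)^2 - \<beta> * (tw1 e k (pi/2) x)^2 + (1 - c^2) * (tw e k (pi/2) x)^2) \<partial>lborel)"
    unfolding I_fun_def
    by (rule Bochner_Integration.integral_add[symmetric]) (use I0 I1 in simp_all)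
  also have "\<dots> = (\<integral>x. Hf e k \<beta> (1 - c^2) (e * x) \<partial>lborel)"
    by (simp only: pointwise_sum)
  also have "\<dots> = (\<integral>t. Hf e k \<beta> (1 - c^2) t \<partial>lborel) / e"
    using lborel_integral_real_affine[OF e0, of "Hf e k \<beta> (1 - c^2)" 0] e by simp
  finally show ?thesis .
qed

definition Aint :: "real \<Rightarrow> real \<Rightarrow> real" where
  "Aint k \<beta> = (\<integral>t. (E2 t)^2 + k^2 * ((EE t)^2 + (E2 t)^2) + (4 * k^2 + \<bar>\<beta>\<bar>) * (E1 t)^2 \<partial>lborel)"
definition Bint :: real where "Bint = (\<integral>t. (EE t)^2 \<partial>lborel)"

lemma Hf_bound:
  assumes e: "e^2 \<le> 1"
  shows "(\<integral>t. Hf e k \<beta> s t \<partial>lborel) \<le> e^2 * Aint k \<beta> + (k^4 - \<beta> * k^2 + s) * Bint"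
proof -
  have pw: "Hf e k \<beta> s t \<le> e^2 * ((E2 t)^2 + k^2 * ((EE t)^2 + (E2 t)^2) + (4 * k^2 + \<bar>\<beta>\<bar>) * (E1 t)^2)
      + (k^4 - \<beta> * k^2 + s) * (EE t)^2" for t
  proof -
    have 1: "e^2 * (E2 t)^2 \<le> (E2 t)^2" using e by (simp add: mult_left_le_one_le)
    have 2: "- 2 * k^2 * (EE t * E2 t) \<le> k^2 * ((EE t)^2 + (E2 t)^2)"
    proof -
      have "0 \<le> k^2 * (EE t + E2 t)^2" by simp
      then show ?thesis by (simp add: power2_eq_square algebra_simps)
    qed
    have 3: "(4 * k^2 - \<beta>) * (E1 t)^2 \<le> (4 * k^2 + \<bar>\<beta>\<bar>) * (E1 t)^2"
      by (rule mult_right_mono) auto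
    have "e^2 * (E2 t)^2 - 2 * k^2 * (EE t * E2 t) + (4 * k^2 - \<beta>) * (E1 t)^2
       \<le> (E2 t)^2 + k^2 * ((EE t)^2 + (E2 t)^2) + (4 * k^2 + \<bar>\<beta>\<bar>) * (E1 t)^2"
      using 1 2 3 by linarith
    then show ?thesis unfolding Hf_def by (simp add: mult_left_mono)
  qed
  have iA: "integrable lborel (\<lambda>t. (E2 t)^2 + k^2 * ((EE t)^2 + (E2 t)^2) + (4 * k^2 + \<bar>\<beta>\<bar>) * (E1 t)^2)"
    by (intro Bochner_Integration.integrable_add integrable_mult_right int_EE int_E1 int_E2)
  have "(\<integral>t. Hf e k \<beta> s t \<partial>lborel) \<le> (\<integral>t. e^2 * ((E2 t)^2 + k^2 * ((EE t)^2 + (E2 t)^2) + (4 * k^2 + \<bar>\<beta>\<bar>) * (E1 t)^2)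
      + (k^4 - \<beta> * k^2 + s) * (EE t)^2 \<partial>lborel)"
    by (rule integral_mono[OF int_Hf]) (use iA int_EE pw in auto)
  also have "\<dots> = e^2 * Aint k \<beta> + (k^4 - \<beta> * k^2 + s) * Bint"
    unfolding Aint_def Bint_def using iA int_EE by simp
  finally show ?thesis .
qed

lemma K_eq:
  assumes p: "p > 1"
  shows "K_fun p u = (\<integral>t. \<bar>u t\<bar> powr (p + 1) \<partial>lborel)"
  unfolding K_fun_def Fnl_def using p by simp

lemma K_nonneg: "p > 1 \<Longrightarrow> 0 \<le> K_fun p u"
  by (simp add: K_eq integral_nonneg_AE)

lemma tw_cont: "continuous_on UNIV (tw e k th)"
proof -
  have c: "continuous_on UNIV (\<lambda>x. EE (e * x))"
    by (auto intro!: continuous_on_compose2[OF cont_EE(1)] continuous_intros)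
  show ?thesis unfolding tw_def by (intro continuous_intros c)
qed

lemma tw_abs_le: "\<bar>tw e k th x\<bar> \<le> EE (e * x)"
proof -
  have "\<bar>cos (k * x - th)\<bar> \<le> 1" by simp
  then show ?thesis unfolding tw_def using EE_pos[of "e*x"]
    by (simp add: abs_mult mult_left_le)
qed

lemma int_tw_powr:
  assumes p: "p > 1" and e: "e \<noteq> 0"
  shows "integrable lborel (\<lambda>x. \<bar>tw e k th x\<bar> powr (p + 1))"
proof (rule Bochner_Integration.integrable_bound)
  show "integrable lborel (\<lambda>x. (EE (e * x))^2)" using int_scale[OF int_EE e] by simp
  have [measurable]: "tw e k th \<in> borel_measurable borel" using borel_measurable_continuous_onI[OF tw_cont] .
  show "(\<lambda>x. \<bar>tw e k th x\<bar> powr (p + 1)) \<in> borel_measurable lborel" by measurable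
  show "AE x in lborel. norm (\<bar>tw e k th x\<bar> powr (p + 1)) \<le> norm ((EE (e * x))^2)"
  proof (rule AE_I2)
    fix x
    have a: "\<bar>tw e k th x\<bar> \<le> 1" using tw_abs_le[of e k th x] EE_le1[of "e*x"] by linarith
    have "\<bar>tw e k th x\<bar> powr (p + 1) \<le> \<bar>tw e k th x\<bar> powr 2"
      by (rule powr_mono') (use p a in auto)
    also have "\<dots> = \<bar>tw e k th x\<bar>^2" by simp
    also have "\<dots> \<le> (EE (e * x))^2"
      by (rule power_mono[OF tw_abs_le]) simp
    finally show "norm (\<bar>tw e k th x\<bar> powr (p + 1)) \<le> norm ((EE (e * x))^2)" by simp
  qed
qed

definition c1 :: "real \<Rightarrow> real" where "c1 p = (exp (- 1 / 4) / sqrt 2) powr (p + 1)"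

lemma c1_pos: "0 < c1 p" unfolding c1_def by simp

lemma K_sum_lower:
  assumes p: "p > 1" and e: "e > 0"
  shows "2 * c1 p / e \<le> K_fun p (tw e k 0) + K_fun p (tw e k (pi/2))"
proof -
  have e0: "e \<noteq> 0" using e by simp
  define a0 where "a0 = exp (- 1 / 4) / sqrt 2"
  have a0: "0 \<le> a0" unfolding a0_def by simp
  have pw: "c1 p * indicator {-1/e..1/e} x \<le> \<bar>tw e k 0 x\<bar> powr (p + 1) + \<bar>tw e k (pi/2) x\<bar> powr (p + 1)" for x
  proof (cases "x \<in> {-1/e..1/e}")
    case False then show ?thesis by simp
  next
    case True
    then have "\<bar>e * x\<bar> \<le> 1" using e by (auto simp: abs_le_iff field_simps)
    then have "(e * x)^2 \<le> 1" by (simp add: abs_square_le_1)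
    then have EEb: "exp (- 1 / 4) \<le> EE (e * x)" unfolding EE_def by simp
    have tw0: "tw e k 0 x = EE (e * x) * cos (k * x)" unfolding tw_def by simp
    have tw1: "tw e k (pi/2) x = EE (e * x) * sin (k * x)" unfolding tw_def by (simp add: cos_diff)
    have cs: "(cos (k * x))^2 + (sin (k * x))^2 = 1" by simp
    have half: "1 / sqrt 2 \<le> \<bar>cos (k * x)\<bar> \<or> 1 / sqrt 2 \<le> \<bar>sin (k * x)\<bar>"
    proof -
      have "1/2 \<le> (cos (k * x))^2 \<or> 1/2 \<le> (sin (k * x))^2" using cs by linarith
      moreover have "1/2 \<le> y^2 \<Longrightarrow> 1 / sqrt 2 \<le> \<bar>y\<bar>" for y :: real
      proof -
        assume "1/2 \<le> y^2"
        then have "sqrt (1/2) \<le> sqrt (y^2)" by (rule real_sqrt_le_mono)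
        then show ?thesis by (simp add: real_sqrt_divide)
      qed
      ultimately show ?thesis by blast
    qed
    have lb: "a0 \<le> \<bar>tw e k 0 x\<bar> \<or> a0 \<le> \<bar>tw e k (pi/2) x\<bar>"
    proof -
      have "exp (- 1 / 4) * (1 / sqrt 2) \<le> EE (e * x) * \<bar>cos (k * x)\<bar>" if "1 / sqrt 2 \<le> \<bar>cos (k * x)\<bar>"
        by (rule mult_mono[OF EEb that]) (simp_all add: less_imp_le[OF EE_pos])
      moreover have "exp (- 1 / 4) * (1 / sqrt 2) \<le> EE (e * x) * \<bar>sin (k * x)\<bar>" if "1 / sqrt 2 \<le> \<bar>sin (k * x)\<bar>"
        by (rule mult_mono[OF EEb that]) (simp_all add: less_imp_le[OF EE_pos])
      ultimately show ?thesis using half unfolding tw0 tw1 a0_def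
        by (auto simp: abs_mult abs_of_pos[OF EE_pos])
    qed
    have "c1 p \<le> \<bar>tw e k 0 x\<bar> powr (p + 1) + \<bar>tw e k (pi/2) x\<bar> powr (p + 1)"
    proof (cases "a0 \<le> \<bar>tw e k 0 x\<bar>")
      case True
      have "c1 p \<le> \<bar>tw e k 0 x\<bar> powr (p + 1)" unfolding c1_def a0_def[symmetric]
        by (rule powr_mono2) (use p a0 True in auto)
      then show ?thesis by (smt (verit) powr_ge_zero)
    next
      case False
      then have "a0 \<le> \<bar>tw e k (pi/2) x\<bar>" using lb by blast
      then have "c1 p \<le> \<bar>tw e k (pi/2) x\<bar> powr (p + 1)" unfolding c1_def a0_def[symmetric]
        by (intro powr_mono2) (use p a0 in auto)
      then show ?thesis by (smt (verit) powr_ge_zero)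
    qed
    then show ?thesis using True by simp
  qed
  have iI: "integrable lborel (\<lambda>x. c1 p * indicator {-1/e..1/e} x)"
  proof -
    have "set_integrable lborel {-1/e..1/e} (\<lambda>_. c1 p)"
      by (auto intro!: borel_integrable_atLeastAtMost' continuous_intros)
    then show ?thesis unfolding set_integrable_def by (simp add: mult.commute)
  qed
  have "(\<integral>x. c1 p * indicator {-1/e..1/e} x \<partial>lborel) \<le> (\<integral>x. \<bar>tw e k 0 x\<bar> powr (p + 1) + \<bar>tw e k (pi/2) x\<bar> powr (p + 1) \<partial>lborel)"
    by (rule integral_mono[OF iI]) (use int_tw_powr[OF p e0] pw in auto)
  moreover have "(\<integral>x. c1 p * indicator {-1/e..1/e} x \<partial>lborel) = 2 * c1 p / e"
    using e by simp
  moreover have "(\<integral>x. \<bar>tw e k 0 x\<bar> powr (p + 1) + \<bar>tw e k (pi/2) x\<bar> powr (p + 1) \<partial>lborel)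
      = K_fun p (tw e k 0) + K_fun p (tw e k (pi/2))"
    unfolding K_eq[OF p] by (rule Bochner_Integration.integral_add) (use int_tw_powr[OF p e0] in auto)
  ultimately show ?thesis by simp
qed

lemma m_facts:
  assumes p: "p > 1" and bc: "(max \<beta> 0)^2 / 4 \<le> 1 - c^2"
    and H: "H2_triple u u1 u2" and u0: "u \<noteq> (\<lambda>_. 0)"
  shows "0 \<le> m_fun p \<beta> c" "m_fun p \<beta> c \<le> I_fun \<beta> c u u1 u2 / (K_fun p u) powr (2 / (p + 1))"
proof -
  define R where "R = {I_fun \<beta> c u u1 u2 / (K_fun p u) powr (2 / (p + 1)) | u u1 u2.
                        H2_triple u u1 u2 \<and> u \<noteq> (\<lambda>_. 0)}"
  have m: "m_fun p \<beta> c = Inf R" unfolding m_fun_def R_def by simp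
  have nn: "\<And>r. r \<in> R \<Longrightarrow> 0 \<le> r"
    unfolding R_def using I_nonneg[OF _ bc] by (auto intro!: divide_nonneg_nonneg)
  have mem: "I_fun \<beta> c u u1 u2 / (K_fun p u) powr (2 / (p + 1)) \<in> R"
    unfolding R_def using H u0 by blast
  show "0 \<le> m_fun p \<beta> c" unfolding m using mem nn by (intro cInf_greatest) auto
  show "m_fun p \<beta> c \<le> I_fun \<beta> c u u1 u2 / (K_fun p u) powr (2 / (p + 1))"
    unfolding m by (rule cInf_lower[OF mem]) (use nn in \<open>auto simp: bdd_below_def\<close>)
qed

lemma K_zero: "p > 1 \<Longrightarrow> K_fun p (\<lambda>_. 0) = 0"
  by (simp add: K_eq)

lemma m_bound:
  assumes p: "p > 1" and e: "e > 0" "e^2 \<le> 1" and bc: "(max \<beta> 0)^2 / 4 \<le> 1 - c^2"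
    and k: "k = sqrt (max \<beta> 0 / 2)"
  shows "0 \<le> m_fun p \<beta> c"
    "m_fun p \<beta> c \<le> ((e^2 * Aint k \<beta> + (1 - c^2 - (max \<beta> 0)^2 / 4) * Bint) / e) / (c1 p / e) powr (2 / (p + 1))"
proof -
  have e0: "e \<noteq> 0" using e by simp
  define S where "S = (\<integral>t. Hf e k \<beta> (1 - c^2) t \<partial>lborel) / e"
  define Sb where "Sb = (e^2 * Aint k \<beta> + (1 - c^2 - (max \<beta> 0)^2 / 4) * Bint) / e"
  have k2: "k^2 = max \<beta> 0 / 2" unfolding k by simp
  have k4: "k^4 = (max \<beta> 0)^2 / 4"
  proof -
    have "k^4 = (k^2)^2" by (simp add: power4_eq_xxxx power2_eq_square)
    then show ?thesis unfolding k2 by (simp add: power_divide)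
  qed
  have dl: "k^4 - \<beta> * k^2 + (1 - c^2) = 1 - c^2 - (max \<beta> 0)^2 / 4"
    unfolding k4 k2 by (cases "\<beta> \<le> 0") (auto simp: max_def power2_eq_square field_simps)
  have SSb: "S \<le> Sb" unfolding S_def Sb_def
    by (rule divide_right_mono) (use Hf_bound[OF e(2), of k \<beta> "1 - c^2"] dl e in auto)
  have sumI: "I_fun \<beta> c (tw e k 0) (tw1 e k 0) (tw2 e k 0) + I_fun \<beta> c (tw e k (pi/2)) (tw1 e k (pi/2)) (tw2 e k (pi/2)) = S"
    unfolding S_def by (rule sum_I[OF e(1)])
  have Ith: "I_fun \<beta> c (tw e k th) (tw1 e k th) (tw2 e k th) \<le> Sb" if th: "th = 0 \<or> th = pi/2" for th
  proof -
    have "0 \<le> I_fun \<beta> c (tw e k th') (tw1 e k th') (tw2 e k th')" for th'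
      by (rule I_nonneg[OF tw_H2[OF e0] bc])
    then have a: "0 \<le> I_fun \<beta> c (tw e k 0) (tw1 e k 0) (tw2 e k 0)"
      and b: "0 \<le> I_fun \<beta> c (tw e k (pi/2)) (tw1 e k (pi/2)) (tw2 e k (pi/2))" by blast+
    from th show ?thesis
    proof
      assume t: "th = 0" show ?thesis unfolding t using b sumI SSb by linarith
    next
      assume t: "th = pi/2" show ?thesis unfolding t using a sumI SSb by linarith
    qed
  qed
  have Ksum: "2 * c1 p / e \<le> K_fun p (tw e k 0) + K_fun p (tw e k (pi/2))" by (rule K_sum_lower[OF p e(1)])
  have "2 * c1 p / e = c1 p / e + c1 p / e" by simp
  then have "c1 p / e \<le> K_fun p (tw e k 0) \<or> c1 p / e \<le> K_fun p (tw e k (pi/2))" using Ksum by linarith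
  then obtain th where th: "th = 0 \<or> th = pi/2" and Kth: "c1 p / e \<le> K_fun p (tw e k th)"
    by blast
  have cpos: "0 < c1 p / e" using c1_pos e by simp
  have u0: "tw e k th \<noteq> (\<lambda>_. 0)"
  proof
    assume "tw e k th = (\<lambda>_. 0)"
    then have "K_fun p (tw e k th) = 0" using K_zero[OF p] by simp
    then show False using Kth cpos by simp
  qed
  note mf = m_facts[OF p bc tw_H2[OF e0] u0]
  show "0 \<le> m_fun p \<beta> c" by (rule mf(1))
  have "I_fun \<beta> c (tw e k th) (tw1 e k th) (tw2 e k th) / (K_fun p (tw e k th)) powr (2 / (p + 1))
      \<le> Sb / (c1 p / e) powr (2 / (p + 1))"
  proof (rule frac_le)
    show "0 \<le> Sb" using Ith[OF th] I_nonneg[OF tw_H2[OF e0] bc] by (meson order_trans)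
    show "I_fun \<beta> c (tw e k th) (tw1 e k th) (tw2 e k th) \<le> Sb" by (rule Ith[OF th])
    show "0 < (c1 p / e) powr (2 / (p + 1))" using cpos c1_pos[of p] e by simp
    show "(c1 p / e) powr (2 / (p + 1)) \<le> K_fun p (tw e k th) powr (2 / (p + 1))"
      by (rule powr_mono2) (use p cpos Kth in auto)
  qed
  with mf(2) show "m_fun p \<beta> c \<le> ((e^2 * Aint k \<beta> + (1 - c^2 - (max \<beta> 0)^2 / 4) * Bint) / e) / (c1 p / e) powr (2 / (p + 1))"
    unfolding Sb_def by linarith
qed

theorem mainTheorem15:
  fixes p \<beta> :: real
  assumes "p > 1" and "\<beta> < 2"
  shows "(\<lambda>c. d_fun p \<beta> c) \<in> O[at_left (cstar \<beta>)](\<lambda>c. (cstar \<beta> - c) powr ((p + 3) / (2 * (p - 1))))"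
proof -
  note p = assms(1)
  define b where "b = max \<beta> 0"
  have b0: "0 \<le> b" and b2: "b < 2" using assms(2) by (auto simp: b_def)
  have bb: "b^2 < 4"
  proof -
    have "b^2 < 2^2" using b0 b2 by (intro power_strict_mono) auto
    then show ?thesis by simp
  qed
  define cs where "cs = cstar \<beta>"
  have cs2: "cs^2 = 1 - b^2 / 4" unfolding cs_def cstar_def b_def[symmetric] using bb by simp
  have cspos: "0 < cs" unfolding cs_def cstar_def b_def[symmetric] using bb by simp
  have csle: "cs \<le> 1" unfolding cs_def cstar_def b_def[symmetric] using b0 by simp
  define k where "k = sqrt (b / 2)"
  define a where "a = 2 / (p + 1)"
  define r where "r = (p + 1) / (p - 1)"
  define \<gamma> where "\<gamma> = (p + 3) / (2 * (p - 1))"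
  define M1 where "M1 = (Aint k \<beta> + Bint) / c1 p powr a"
  define Cst where "Cst = (p - 1) / (2 * (p + 1)) * M1 powr r * 2 powr \<gamma>"
  have apos: "0 < a" unfolding a_def using p by simp
  have rpos: "0 < r" unfolding r_def using p by simp
  have gpos: "0 \<le> \<gamma>" unfolding \<gamma>_def using p by simp
  have h1: "(1 + a) / 2 = (p + 3) / (2 * (p + 1))" unfolding a_def using p by (simp add: field_simps)
  have h2: "(p + 3) / (2 * (p + 1)) * ((p + 1) / (p - 1)) = (p + 3) / (2 * (p - 1))"
  proof -
    have g: "y \<noteq> 0 \<Longrightarrow> z \<noteq> 0 \<Longrightarrow> x / (2 * y) * (y / z) = x / (2 * z)" for x y z :: real
      by (simp add: field_simps)
    show ?thesis by (rule g) (use p in auto)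
  qed
  have ga: "(1 + a) / 2 * r = \<gamma>" unfolding h1 r_def \<gamma>_def by (rule h2)
  have key: "norm (d_fun p \<beta> c) \<le> Cst * norm ((cs - c) powr \<gamma>)" if c: "c \<in> {0<..<cs}" for c
  proof -
    define \<delta> where "\<delta> = 1 - c^2 - b^2 / 4"
    have c2: "c^2 < cs^2" using c by (intro power_strict_mono) auto
    have dpos: "0 < \<delta>" unfolding \<delta>_def using c2 cs2 by simp
    have dle: "\<delta> \<le> 1" unfolding \<delta>_def using zero_le_power2[of c] zero_le_power2[of b] by linarith
    define e where "e = sqrt \<delta>"
    have epos: "0 < e" unfolding e_def using dpos by simp
    have e2: "e^2 = \<delta>" unfolding e_def using dpos by simp
    have bc: "(max \<beta> 0)^2 / 4 \<le> 1 - c^2" using dpos unfolding \<delta>_def b_def by simp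
    note mb = m_bound[OF p epos _ bc, of k, unfolded b_def[symmetric], folded k_def]
    have m0: "0 \<le> m_fun p \<beta> c" using mb(1) e2 dle k_def by simp
    have m1: "m_fun p \<beta> c \<le> ((e^2 * Aint k \<beta> + \<delta> * Bint) / e) / (c1 p / e) powr a"
      using mb(2) e2 dle k_def unfolding a_def \<delta>_def by simp
    have c1p: "0 < c1 p" by (rule c1_pos)
    have "((e^2 * Aint k \<beta> + \<delta> * Bint) / e) / (c1 p / e) powr a
        = (Aint k \<beta> + Bint) * e / (c1 p powr a / e powr a)"
      unfolding e2[symmetric] using epos c1p by (simp add: powr_divide power2_eq_square field_simps)
    also have "\<dots> = M1 * (e * e powr a)"
      unfolding M1_def using epos c1p by (simp add: field_simps)
    also have "\<dots> = M1 * e powr (1 + a)"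
      using epos by (simp add: powr_add)
    also have "\<dots> = M1 * \<delta> powr ((1 + a) / 2)"
      unfolding e_def using dpos by (simp add: powr_half_sqrt[symmetric] powr_powr)
    finally have m2: "m_fun p \<beta> c \<le> M1 * \<delta> powr ((1 + a) / 2)" using m1 by simp
    have "m_fun p \<beta> c powr r \<le> (M1 * \<delta> powr ((1 + a) / 2)) powr r"
      by (rule powr_mono2) (use rpos m0 m2 in auto)
    also have "\<dots> = M1 powr r * \<delta> powr \<gamma>"
    proof -
      have "(1 + a) / 2 * r = (1 + a) * r / 2" by simp
      then show ?thesis by (simp add: powr_mult powr_powr ga[symmetric])
    qed
    also have "\<dots> \<le> M1 powr r * (2 * (cs - c)) powr \<gamma>"
    proof (rule mult_left_mono)
      have "\<delta> = (cs - c) * (cs + c)" unfolding \<delta>_def using cs2 by (simp add: algebra_simps power2_eq_square)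
      also have "\<dots> \<le> (cs - c) * 2" using c csle by (intro mult_left_mono) auto
      finally show "\<delta> powr \<gamma> \<le> (2 * (cs - c)) powr \<gamma>"
        by (intro powr_mono2) (use gpos dpos in auto)
    qed simp
    also have "\<dots> = M1 powr r * 2 powr \<gamma> * (cs - c) powr \<gamma>"
      by (subst powr_mult) (simp only: mult.assoc)
    finally have mr: "m_fun p \<beta> c powr r \<le> M1 powr r * 2 powr \<gamma> * (cs - c) powr \<gamma>" .
    have "d_fun p \<beta> c = (p - 1) / (2 * (p + 1)) * m_fun p \<beta> c powr r"
      unfolding d_fun_def r_def ..
    also have "\<dots> \<le> (p - 1) / (2 * (p + 1)) * (M1 powr r * 2 powr \<gamma> * (cs - c) powr \<gamma>)"
      by (rule mult_left_mono[OF mr]) (use p in simp)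
    finally have "d_fun p \<beta> c \<le> Cst * (cs - c) powr \<gamma>" unfolding Cst_def by (simp add: mult.assoc)
    moreover have "0 \<le> d_fun p \<beta> c" unfolding d_fun_def using p by simp
    ultimately show ?thesis by simp
  qed
  have "eventually (\<lambda>c. c \<in> {0<..<cs}) (at_left cs)" by (rule eventually_at_left_real[OF cspos])
  then have "eventually (\<lambda>c. norm (d_fun p \<beta> c) \<le> Cst * norm ((cs - c) powr \<gamma>)) (at_left cs)"
    by (rule eventually_mono) (rule key)
  then show ?thesis unfolding cs_def \<gamma>_def by (rule bigoI)
qed

end
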